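(* Let $P=\{p_1,\dots,p_n\}$ be weighted points in $\mathbb{R}^2$ with total weight $1$, let $S=\{s_1,\dots,s_m\}$ be line segments in $\mathbb{R}^2$ of total length $1$, let $0<\delta$, and let $Q$ be the set of subsegments obtained from $S$ by the subdivision procedure described in the context. Let $G$ be the complete bipartite graph on $P\cup Q$ in which each $p\in P$ has supply $\|p\|$, each $q\in Q$ has demand equal to its length $\|q\|$, and the cost of edge $(p,q)$ is the Euclidean distance from $p$ to the closest point of $q$. Then the earth mover's distance between $P$ and $Q$ is at least the cost $\|\mathcal{W}\|$ of a minimum cost flow $\mathcal{W}$ in $G$ (a flow sending all supply to satisfy all demands).
   Context: Mass of each segment equals its length and is spread uniformly over it with density one. A transport plan from $P$ to a set of segments assigns to each point $p$ and each point $x$ of the segments a density $\tau_p(x)\in[0,1]$ such that each point $p$ sends total mass $\|p\|$ and each point $x$ of the segments receives total density $1$; its cost is $\sum_p\int\tau_p(x)\,\|p-x\|_2\,dx$; the earth mover's distance is the infimum of costs. Subdivision procedure: repeatedly, for each current subsegment $s'$: if there is a point of $P$ such that all of $s'$ lies within Euclidean distance $\delta/(nm)$ of it, leave $s'$ as is; otherwise, if there is a point $p\in P$ for which the ratio between the largest and smallest distance from $p$ to points of $s'$ exceeds $1+\delta$, cut $s'$ into two halves. The final set of subsegments is $Q$. *)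

theory Defs
  imports "HOL-Analysis.Analysis"
begin

type_synonym pt = "real^2"
type_synonym seg = "pt \<times> pt"

definition seg_set :: "seg \<Rightarrow> pt set" where
  "seg_set s = closed_segment (fst s) (snd s)"

definition seg_len :: "seg \<Rightarrow> real" where
  "seg_len s = dist (fst s) (snd s)"

text \<open>Affine parametrisation over [0,1]; arclength element is seg_len s * dt.\<close>
definition seg_pt :: "seg \<Rightarrow> real \<Rightarrow> pt" where
  "seg_pt s t = fst s + t *\<^sub>R (snd s - fst s)"

text \<open>Weighted points: list of (position, weight). Transport plan: tau i k t is the
  density sent by point i to the point seg_pt (T!k) t of segment k.\<close>
definition transport_plan ::
  "(pt \<times> real) list \<Rightarrow> seg list \<Rightarrow> (nat \<Rightarrow> nat \<Rightarrow> real \<Rightarrow> real) \<Rightarrow> bool" where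
  "transport_plan P T tau \<longleftrightarrow>
     (\<forall>i<length P. \<forall>k<length T. (tau i k) integrable_on {0..1} \<and>
        (\<forall>t\<in>{0..1}. 0 \<le> tau i k t \<and> tau i k t \<le> 1)) \<and>
     (\<forall>i<length P. (\<Sum>k<length T. seg_len (T!k) * integral {0..1} (tau i k)) = snd (P!i)) \<and>
     (\<forall>k<length T. \<forall>t\<in>{0..1}. (\<Sum>i<length P. tau i k t) = 1)"

definition plan_cost ::
  "(pt \<times> real) list \<Rightarrow> seg list \<Rightarrow> (nat \<Rightarrow> nat \<Rightarrow> real \<Rightarrow> real) \<Rightarrow> real" where
  "plan_cost P T tau =
     (\<Sum>i<length P. \<Sum>k<length T.
        seg_len (T!k) * integral {0..1} (\<lambda>t. tau i k t * dist (fst (P!i)) (seg_pt (T!k) t)))"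

definition emd :: "(pt \<times> real) list \<Rightarrow> seg list \<Rightarrow> real" where
  "emd P T = Inf (plan_cost P T ` {tau. transport_plan P T tau})"

definition is_flow :: "(pt \<times> real) list \<Rightarrow> seg list \<Rightarrow> (nat \<Rightarrow> nat \<Rightarrow> real) \<Rightarrow> bool" where
  "is_flow P Q f \<longleftrightarrow>
     (\<forall>i<length P. \<forall>k<length Q. 0 \<le> f i k) \<and>
     (\<forall>i<length P. (\<Sum>k<length Q. f i k) = snd (P!i)) \<and>
     (\<forall>k<length Q. (\<Sum>i<length P. f i k) = seg_len (Q!k))"

definition flow_cost :: "(pt \<times> real) list \<Rightarrow> seg list \<Rightarrow> (nat \<Rightarrow> nat \<Rightarrow> real) \<Rightarrow> real" where
  "flow_cost P Q f = (\<Sum>i<length P. \<Sum>k<length Q. f i k * infdist (fst (P!i)) (seg_set (Q!k)))"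

definition is_min_cost_flow :: "(pt \<times> real) list \<Rightarrow> seg list \<Rightarrow> (nat \<Rightarrow> nat \<Rightarrow> real) \<Rightarrow> bool" where
  "is_min_cost_flow P Q f \<longleftrightarrow>
     is_flow P Q f \<and> (\<forall>g. is_flow P Q g \<longrightarrow> flow_cost P Q f \<le> flow_cost P Q g)"

text \<open>Subdivision procedure (Ps = point positions, eps = delta/(n m)).\<close>
definition seg_near :: "pt list \<Rightarrow> real \<Rightarrow> seg \<Rightarrow> bool" where
  "seg_near Ps eps s \<longleftrightarrow> (\<exists>p\<in>set Ps. \<forall>x\<in>seg_set s. dist p x \<le> eps)"

text \<open>ratio (largest distance)/(smallest distance) exceeds 1+delta
  (a zero smallest distance with positive largest distance counts as an infinite ratio).\<close>
definition seg_ratio_big :: "pt list \<Rightarrow> real \<Rightarrow> seg \<Rightarrow> bool" where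
  "seg_ratio_big Ps delta s \<longleftrightarrow>
     (\<exists>p\<in>set Ps. (SUP x\<in>seg_set s. dist p x) > (1 + delta) * (INF x\<in>seg_set s. dist p x))"

inductive subdiv :: "pt list \<Rightarrow> real \<Rightarrow> real \<Rightarrow> seg \<Rightarrow> seg list \<Rightarrow> bool"
  for Ps :: "pt list" and delta :: real and eps :: real where
  keep_near: "seg_near Ps eps s \<Longrightarrow> subdiv Ps delta eps s [s]"
| keep_flat: "\<not> seg_near Ps eps s \<Longrightarrow> \<not> seg_ratio_big Ps delta s \<Longrightarrow> subdiv Ps delta eps s [s]"
| split: "\<not> seg_near Ps eps (a, b) \<Longrightarrow> seg_ratio_big Ps delta (a, b) \<Longrightarrow>
    subdiv Ps delta eps (a, midpoint a b) L1 \<Longrightarrow> subdiv Ps delta eps (midpoint a b, b) L2 \<Longrightarrow>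
    subdiv Ps delta eps (a, b) (L1 @ L2)"

end

theory Submission
  imports Defs
begin

lemma subdiv_len:
  assumes "subdiv Ps delta eps s L"
  shows "sum_list (map seg_len L) = seg_len s"
  using assms
proof (induction rule: subdiv.induct)
  case (split a b L1 L2)
  then show ?case by (simp add: seg_len_def dist_midpoint)
qed auto

lemma concat_len:
  assumes "list_all2 (\<lambda>s L. sum_list (map seg_len L) = seg_len s) S Ls"
  shows "sum_list (map seg_len (concat Ls)) = sum_list (map seg_len S)"
  using assms by (induction rule: list_all2_induct) auto

lemma seg_pt_in: "t \<in> {0..1} \<Longrightarrow> seg_pt q t \<in> seg_set q"
  unfolding seg_set_def seg_pt_def closed_segment_def
  by (rule CollectI, rule exI[of _ t]) (auto simp: algebra_simps)

lemma tau_dist_int: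
  fixes tau :: "real \<Rightarrow> real"
  assumes "tau integrable_on {0..1}" "\<forall>t\<in>{0..1}. 0 \<le> tau t"
  shows "(\<lambda>t. tau t * dist p (seg_pt q t)) integrable_on {0..1}"
proof -
  have ai: "tau absolutely_integrable_on {0..1}"
    using assms by (intro nonnegative_absolutely_integrable_1) auto
  have c: "continuous_on {0..1::real} (\<lambda>t. dist p (seg_pt q t))"
    unfolding seg_pt_def by (intro continuous_intros)
  have "(\<lambda>t. dist p (seg_pt q t) * tau t) absolutely_integrable_on {0..1}"
  proof (rule absolutely_integrable_bounded_measurable_product_real)
    show "(\<lambda>t. dist p (seg_pt q t)) \<in> borel_measurable (lebesgue_on {0..1})"
      by (rule continuous_imp_measurable_on_sets_lebesgue[OF c]) auto
    show "bounded ((\<lambda>t. dist p (seg_pt q t)) ` {0..1})"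
      by (intro compact_imp_bounded compact_continuous_image c) auto
  qed (auto simp: ai)
  then show ?thesis
    by (auto dest: absolutely_integrable_on_def[THEN iffD1] simp: mult.commute)
qed

lemma plan_ge:
  assumes tp: "transport_plan P Q tau" and mf: "is_min_cost_flow P Q W"
  shows "flow_cost P Q W \<le> plan_cost P Q tau"
proof -
  define f where "f i k = seg_len (Q!k) * integral {0..1} (tau i k)" for i k
  from tp have int: "\<And>i k. i < length P \<Longrightarrow> k < length Q \<Longrightarrow> tau i k integrable_on {0..1}"
    and bnd: "\<And>i k t. i < length P \<Longrightarrow> k < length Q \<Longrightarrow> t \<in> {0..1} \<Longrightarrow> 0 \<le> tau i k t \<and> tau i k t \<le> 1"
    and row: "\<And>i. i < length P \<Longrightarrow> (\<Sum>k<length Q. f i k) = snd (P!i)"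
    and col: "\<And>k t. k < length Q \<Longrightarrow> t \<in> {0..1} \<Longrightarrow> (\<Sum>i<length P. tau i k t) = 1"
    unfolding transport_plan_def f_def by auto
  have sl: "0 \<le> seg_len q" for q by (simp add: seg_len_def)
  have "is_flow P Q f"
    unfolding is_flow_def
  proof (intro conjI allI impI)
    fix i k assume "i < length P" "k < length Q"
    then show "0 \<le> f i k" unfolding f_def
      using bnd sl by (intro mult_nonneg_nonneg integral_nonneg int) auto
  next
    fix i assume "i < length P" then show "(\<Sum>k<length Q. f i k) = snd (P!i)" by (rule row)
  next
    fix k assume k: "k < length Q"
    have "(\<Sum>i<length P. integral {0..1} (tau i k)) = integral {0..1} (\<lambda>t. \<Sum>i<length P. tau i k t)"
      using int k by (subst integral_sum) auto
    also have "\<dots> = integral {0..1} (\<lambda>t::real. 1::real)"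
      by (rule Henstock_Kurzweil_Integration.integral_cong) (use col k in auto)
    also have "\<dots> = 1" by simp
    finally show "(\<Sum>i<length P. f i k) = seg_len (Q!k)"
      unfolding f_def by (simp add: sum_distrib_left[symmetric])
  qed
  then have "flow_cost P Q W \<le> flow_cost P Q f" using mf unfolding is_min_cost_flow_def by auto
  also have "\<dots> \<le> plan_cost P Q tau"
    unfolding flow_cost_def plan_cost_def f_def
  proof (intro sum_mono)
    fix i k assume i: "i \<in> {..<length P}" and k: "k \<in> {..<length Q}"
    have "integral {0..1} (tau i k) * infdist (fst (P!i)) (seg_set (Q!k))
        = integral {0..1} (\<lambda>t. tau i k t * infdist (fst (P!i)) (seg_set (Q!k)))"
      by simp
    also have "\<dots> \<le> integral {0..1} (\<lambda>t. tau i k t * dist (fst (P!i)) (seg_pt (Q!k) t))"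
    proof (rule integral_le)
      show "(\<lambda>t. tau i k t * infdist (fst (P!i)) (seg_set (Q!k))) integrable_on {0..1}"
        using int i k by (intro integrable_on_mult_left) auto
      show "(\<lambda>t. tau i k t * dist (fst (P!i)) (seg_pt (Q!k) t)) integrable_on {0..1}"
        using int bnd i k by (intro tau_dist_int) auto
      fix t :: real assume t: "t \<in> {0..1}"
      have "infdist (fst (P!i)) (seg_set (Q!k)) \<le> dist (fst (P!i)) (seg_pt (Q!k) t)"
        by (rule infdist_le[OF seg_pt_in[OF t]])
      then show "tau i k t * infdist (fst (P!i)) (seg_set (Q!k)) \<le> tau i k t * dist (fst (P!i)) (seg_pt (Q!k) t)"
        using bnd i k t by (intro mult_left_mono) auto
    qed
    finally show "seg_len (Q!k) * integral {0..1} (tau i k) * infdist (fst (P!i)) (seg_set (Q!k))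
        \<le> seg_len (Q!k) * integral {0..1} (\<lambda>t. tau i k t * dist (fst (P!i)) (seg_pt (Q!k) t))"
      using sl by (simp add: mult.assoc mult_left_mono)
  qed
  finally show ?thesis .
qed

theorem lemma1:
  fixes P :: "(pt \<times> real) list" and S :: "seg list" and delta :: real
    and Ls :: "seg list list" and Q :: "seg list" and W :: "nat \<Rightarrow> nat \<Rightarrow> real"
  assumes "\<forall>i<length P. 0 < snd (P!i)"
    and "(\<Sum>i<length P. snd (P!i)) = 1"
    and "(\<Sum>j<length S. seg_len (S!j)) = 1"
    and "0 < delta"
    and "list_all2 (subdiv (map fst P) delta (delta / (real (length P) * real (length S)))) S Ls"
    and "Q = concat Ls"
    and "is_min_cost_flow P Q W"
  shows "flow_cost P Q W \<le> emd P Q"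
proof -
  have "list_all2 (\<lambda>s L. sum_list (map seg_len L) = seg_len s) S Ls"
    using assms(5) by (rule list_all2_mono) (rule subdiv_len)
  then have QL: "(\<Sum>k<length Q. seg_len (Q!k)) = 1"
    using concat_len assms(3,6) by (simp add: sum_list_sum_nth atLeast0LessThan)
  define tau0 where "tau0 = (\<lambda>(i::nat) (k::nat) (t::real). snd (P!i))"
  have le1: "snd (P!i) \<le> 1" if "i < length P" for i
  proof -
    have "snd (P!i) \<le> (\<Sum>i<length P. snd (P!i))"
      using assms(1) that by (intro member_le_sum) auto
    then show ?thesis using assms(2) by simp
  qed
  have ic: "integral {0..1} (\<lambda>t::real. c) = c" for c :: real by simp
  have "transport_plan P Q tau0"
    unfolding transport_plan_def tau0_def
  proof (intro conjI allI impI ballI)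
    fix i assume i: "i < length P"
    have "(\<Sum>k<length Q. seg_len (Q!k) * integral {0..1} (\<lambda>t::real. snd (P!i)))
        = (\<Sum>k<length Q. seg_len (Q!k)) * snd (P!i)"
      by (simp only: ic sum_distrib_right)
    then show "(\<Sum>k<length Q. seg_len (Q!k) * integral {0..1} (\<lambda>t::real. snd (P!i))) = snd (P!i)"
      using QL by simp
  qed (use assms(1,2) le1 less_imp_le in auto)
  then have ne: "plan_cost P Q ` {tau. transport_plan P Q tau} \<noteq> {}" by auto
  show ?thesis unfolding emd_def
    by (rule cInf_greatest[OF ne]) (auto intro: plan_ge assms(7))
qed

end
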